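(* Let $G$ be a COM and let $G'$ be an isometric subgraph of $G$ such that every antipodal subgraph of $G'$ is an antipodal subgraph of $G$. Then $G'$ is a COM.
   Context: Hypercube $Q_n$: vertex set $\{+,-\}^n$, adjacency = differing in one coordinate. A partial cube is an isometric subgraph of a hypercube. A subgraph $H$ of a graph $G$ is convex if it contains every shortest path of $G$ between vertices of $H$, and gated if for every vertex $x$ of $G$ there is $x'\in H$ such that for every $u\in H$ some shortest $x$–$u$ path passes through $x'$. A partial cube $G\subseteq Q_n$ ($n$ minimal) is antipodal if with every vertex it contains the vertex with all coordinates flipped; an antipodal subgraph of $G$ is a convex subgraph which is itself an antipodal partial cube. A COM (complex of oriented matroids, identified with its tope graph) is a partial cube all of whose antipodal subgraphs are gated. *)

theory Defs
  imports Main
begin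

text \<open>Vertices of the hypercube Q_n are encoded as subsets of {..<n}:
  a vertex x in {+,-}^n corresponds to the set of coordinates carrying +.
  A (sub)graph of Q_n is given by its vertex set; all subgraphs considered
  (isometric, convex) are induced, so the vertex set determines the graph.\<close>

definition hc_adj :: "nat set \<Rightarrow> nat set \<Rightarrow> bool" where
  "hc_adj x y \<longleftrightarrow> card ((x - y) \<union> (y - x)) = 1"

definition hypercube :: "nat \<Rightarrow> nat set set" where
  "hypercube n = Pow {..<n}"

text \<open>A walk in the induced graph on V from x to y, as the list of its vertices;
  its number of edges is length minus one.\<close>
definition walk_in :: "nat set set \<Rightarrow> nat set \<Rightarrow> nat set \<Rightarrow> nat set list \<Rightarrow> bool" where
  "walk_in V x y p \<longleftrightarrow> p \<noteq> [] \<and> hd p = x \<and> last p = y \<and> set p \<subseteq> V \<and>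
     (\<forall>i. Suc i < length p \<longrightarrow> hc_adj (p ! i) (p ! Suc i))"

definition shortest_path_in :: "nat set set \<Rightarrow> nat set \<Rightarrow> nat set \<Rightarrow> nat set list \<Rightarrow> bool" where
  "shortest_path_in V x y p \<longleftrightarrow> walk_in V x y p \<and>
     (\<forall>q. walk_in V x y q \<longrightarrow> length p \<le> length q)"

text \<open>H is an isometric subgraph of G: d_H(x,y) = d_G(x,y) for all x, y in H
  (d_H \<ge> d_G is automatic since H \<subseteq> G).\<close>
definition isometric_subgraph :: "nat set set \<Rightarrow> nat set set \<Rightarrow> bool" where
  "isometric_subgraph H G \<longleftrightarrow> H \<noteq> {} \<and> H \<subseteq> G \<and>
     (\<forall>x\<in>H. \<forall>y\<in>H. \<forall>p. walk_in G x y p \<longrightarrow> (\<exists>q. walk_in H x y q \<and> length q \<le> length p))"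

definition partial_cube :: "nat \<Rightarrow> nat set set \<Rightarrow> bool" where
  "partial_cube n G \<longleftrightarrow> isometric_subgraph G (hypercube n)"

definition convex_in :: "nat set set \<Rightarrow> nat set set \<Rightarrow> bool" where
  "convex_in H G \<longleftrightarrow> H \<subseteq> G \<and>
     (\<forall>u\<in>H. \<forall>v\<in>H. \<forall>p. shortest_path_in G u v p \<longrightarrow> set p \<subseteq> H)"

definition gated_in :: "nat set set \<Rightarrow> nat set set \<Rightarrow> bool" where
  "gated_in H G \<longleftrightarrow> H \<subseteq> G \<and>
     (\<forall>x\<in>G. \<exists>x'\<in>H. \<forall>u\<in>H. \<exists>p. shortest_path_in G x u p \<and> x' \<in> set p)"

text \<open>For an isometric subgraph of Q_n,
  dropping the constant coordinates gives an isometric embedding into a hypercube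
  of minimal dimension; flipping all coordinates there means flipping exactly these.\<close>
definition nonconst_coords :: "nat set set \<Rightarrow> nat set" where
  "nonconst_coords H = {i. \<exists>a\<in>H. \<exists>b\<in>H. i \<in> a \<and> i \<notin> b}"

definition antipode :: "nat set set \<Rightarrow> nat set \<Rightarrow> nat set" where
  "antipode H x = (x - nonconst_coords H) \<union> (nonconst_coords H - x)"

definition antipodal_partial_cube :: "nat \<Rightarrow> nat set set \<Rightarrow> bool" where
  "antipodal_partial_cube n H \<longleftrightarrow> partial_cube n H \<and> (\<forall>x\<in>H. antipode H x \<in> H)"

definition antipodal_subgraph :: "nat \<Rightarrow> nat set set \<Rightarrow> nat set set \<Rightarrow> bool" where
  "antipodal_subgraph n G H \<longleftrightarrow> convex_in H G \<and> antipodal_partial_cube n H"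

definition is_COM :: "nat \<Rightarrow> nat set set \<Rightarrow> bool" where
  "is_COM n G \<longleftrightarrow> partial_cube n G \<and> (\<forall>H. antipodal_subgraph n G H \<longrightarrow> gated_in H G)"

end

theory Submission
  imports Defs
begin

lemma walk_single: "walk_in V x y [a] \<longleftrightarrow> a = x \<and> a = y \<and> a \<in> V"
  unfolding walk_in_def by auto

lemma walk_cons2: "walk_in V x y (a # b # p) \<longleftrightarrow>
   a = x \<and> a \<in> V \<and> hc_adj a b \<and> walk_in V b y (b # p)"
proof
  assume h: "walk_in V x y (a # b # p)"
  then have "hc_adj ((a#b#p) ! 0) ((a#b#p) ! Suc 0)" unfolding walk_in_def by (metis length_Cons Suc_less_eq zero_less_Suc)
  then have "hc_adj a b" by simp
  moreover have "\<forall>i. Suc i < length (b#p) \<longrightarrow> hc_adj ((b#p) ! i) ((b#p) ! Suc i)"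
  proof (intro allI impI)
    fix i assume "Suc i < length (b#p)"
    then have "Suc (Suc i) < length (a#b#p)" by simp
    then have "hc_adj ((a#b#p) ! Suc i) ((a#b#p) ! Suc (Suc i))" using h unfolding walk_in_def by blast
    then show "hc_adj ((b#p) ! i) ((b#p) ! Suc i)" by simp
  qed
  ultimately show "a = x \<and> a \<in> V \<and> hc_adj a b \<and> walk_in V b y (b # p)"
    using h unfolding walk_in_def by auto
next
  assume h: "a = x \<and> a \<in> V \<and> hc_adj a b \<and> walk_in V b y (b # p)"
  have "\<forall>i. Suc i < length (a#b#p) \<longrightarrow> hc_adj ((a#b#p) ! i) ((a#b#p) ! Suc i)"
  proof (intro allI impI)
    fix i assume i: "Suc i < length (a#b#p)"
    show "hc_adj ((a#b#p) ! i) ((a#b#p) ! Suc i)"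
    proof (cases i)
      case 0 then show ?thesis using h by auto
    next
      case (Suc j)
      then have "Suc j < length (b#p)" using i by simp
      then have "hc_adj ((b#p) ! j) ((b#p) ! Suc j)" using h unfolding walk_in_def by blast
      then show ?thesis using Suc by simp
    qed
  qed
  then show "walk_in V x y (a # b # p)" using h unfolding walk_in_def by auto
qed

lemma walk_nonempty: "walk_in V x y p \<Longrightarrow> p = x # tl p"
  unfolding walk_in_def by (cases p) auto

lemma walk_mono: "walk_in V x y p \<Longrightarrow> V \<subseteq> W \<Longrightarrow> walk_in W x y p"
  unfolding walk_in_def by auto

lemma walk_append: "walk_in V x y p \<Longrightarrow> walk_in V y z q \<Longrightarrow>
   walk_in V x z (p @ tl q) \<and> length (p @ tl q) + 1 = length p + length q"
proof (induction p arbitrary: x)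
  case Nil then show ?case unfolding walk_in_def by simp
next
  case (Cons a p)
  show ?case
  proof (cases p)
    case Nil
    then have "a = x" "a = y" using Cons.prems walk_single by auto
    moreover have "q = y # tl q" using Cons.prems walk_nonempty by blast
    ultimately have "(a # p) @ tl q = q" using Nil by (metis append_Cons append_Nil)
    then show ?thesis using Nil Cons.prems(2) \<open>a = x\<close> \<open>a = y\<close> by simp
  next
    case (Cons b p')
    have w: "a = x" "a \<in> V" "hc_adj a b" "walk_in V b y (b # p')"
      using Cons.prems(1) Cons walk_cons2 by auto
    have "q \<noteq> []" using Cons.prems(2) unfolding walk_in_def by simp
    have ih: "walk_in V b z (p @ tl q) \<and> length (p @ tl q) + 1 = length p + length q"
      using Cons.IH[of b] w(4) Cons.prems(2) Cons \<open>q \<noteq> []\<close> by simp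
    have "walk_in V x z (a # b # (p' @ tl q))"
      using walk_cons2 w ih Cons by simp
    then show ?thesis using ih Cons \<open>q \<noteq> []\<close> by simp
  qed
qed

lemma walk_split: "walk_in V x y p \<Longrightarrow> x' \<in> set p \<Longrightarrow>
  \<exists>p1 p2. walk_in V x x' p1 \<and> walk_in V x' y p2 \<and> length p1 + length p2 = length p + 1"
proof (induction p arbitrary: x)
  case Nil then show ?case by simp
next
  case (Cons a p)
  show ?case
  proof (cases "x' = a")
    case True
    have "walk_in V x x' [a]" using Cons.prems walk_nonempty[OF Cons.prems(1)] True
      unfolding walk_in_def by auto
    then show ?thesis using Cons.prems True walk_nonempty[OF Cons.prems(1)] by (intro exI[of _ "[a]"] exI[of _ "a#p"]) auto
  next
    case False
    then have xp: "x' \<in> set p" using Cons.prems by simp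
    then obtain b p' where p: "p = b # p'" by (cases p) auto
    have w: "a = x" "a \<in> V" "hc_adj a b" "walk_in V b y (b # p')"
      using Cons.prems(1) p walk_cons2 by auto
    obtain p1 p2 where h: "walk_in V b x' p1" "walk_in V x' y p2" "length p1 + length p2 = length p + 1"
      using Cons.IH[of b] w(4) xp p by blast
    have "p1 = b # tl p1" using h(1) walk_nonempty by blast
    then have "walk_in V x x' (a # p1)" using walk_cons2[of V x x' a b "tl p1"] w h(1) by simp
    then show ?thesis using h by (intro exI[of _ "a#p1"] exI[of _ p2]) simp
  qed
qed

theorem mainTheorem5:
  fixes n :: nat and G G' :: "nat set set"
  assumes "is_COM n G"
    and "isometric_subgraph G' G"
    and "\<forall>H. antipodal_subgraph n G' H \<longrightarrow> antipodal_subgraph n G H"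
  shows "is_COM n G'"
proof -
  have pcG: "isometric_subgraph G (hypercube n)" and gG: "\<forall>H. antipodal_subgraph n G H \<longrightarrow> gated_in H G"
    using assms(1) unfolding is_COM_def partial_cube_def by auto
  have isoG': "G' \<noteq> {}" "G' \<subseteq> G"
    "\<And>x y p. x \<in> G' \<Longrightarrow> y \<in> G' \<Longrightarrow> walk_in G x y p \<Longrightarrow> \<exists>q. walk_in G' x y q \<and> length q \<le> length p"
    using assms(2) unfolding isometric_subgraph_def by auto
  have pc: "partial_cube n G'"
    unfolding partial_cube_def isometric_subgraph_def
  proof (intro conjI ballI allI impI)
    show "G' \<noteq> {}" by fact
    show "G' \<subseteq> hypercube n" using isoG'(2) pcG unfolding isometric_subgraph_def by auto
  next
    fix x y p assume x: "x \<in> G'" and y: "y \<in> G'" and p: "walk_in (hypercube n) x y p"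
    obtain q where q: "walk_in G x y q" "length q \<le> length p"
      using pcG x y p isoG'(2) unfolding isometric_subgraph_def by blast
    obtain r where "walk_in G' x y r" "length r \<le> length q" using isoG'(3)[OF x y q(1)] by blast
    then show "\<exists>q. walk_in G' x y q \<and> length q \<le> length p" using q(2) by auto
  qed
  have "gated_in H G'" if aH: "antipodal_subgraph n G' H" for H
  proof -
    have HG': "H \<subseteq> G'" using aH unfolding antipodal_subgraph_def convex_in_def by auto
    have "gated_in H G" using gG assms(3) aH by blast
    then have gate: "\<forall>x\<in>G. \<exists>x'\<in>H. \<forall>u\<in>H. \<exists>p. shortest_path_in G x u p \<and> x' \<in> set p"
      unfolding gated_in_def by auto
    show ?thesis unfolding gated_in_def
    proof (intro conjI ballI)
      show "H \<subseteq> G'" by fact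
    next
      fix x assume x: "x \<in> G'"
      then obtain x' where x': "x' \<in> H" "\<forall>u\<in>H. \<exists>p. shortest_path_in G x u p \<and> x' \<in> set p"
        using gate isoG'(2) by blast
      show "\<exists>x'\<in>H. \<forall>u\<in>H. \<exists>p. shortest_path_in G' x u p \<and> x' \<in> set p"
      proof (intro bexI[OF _ x'(1)] ballI)
        fix u assume u: "u \<in> H"
        obtain p where p: "shortest_path_in G x u p" "x' \<in> set p" using x'(2) u by blast
        obtain p1 p2 where s: "walk_in G x x' p1" "walk_in G x' u p2" "length p1 + length p2 = length p + 1"
          using walk_split p unfolding shortest_path_in_def by blast
        have x'G: "x' \<in> G'" "u \<in> G'" using x'(1) u HG' by auto
        obtain q1 where q1: "walk_in G' x x' q1" "length q1 \<le> length p1" using isoG'(3)[OF x x'G(1) s(1)] by blast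
        obtain q2 where q2: "walk_in G' x' u q2" "length q2 \<le> length p2" using isoG'(3)[OF x'G s(2)] by blast
        have ap: "walk_in G' x u (q1 @ tl q2)" "length (q1 @ tl q2) + 1 = length q1 + length q2"
          using walk_append[OF q1(1) q2(1)] by auto
        have "x' \<in> set q1" using q1(1) unfolding walk_in_def by (metis last_in_set)
        then have inq: "x' \<in> set (q1 @ tl q2)" by simp
        have "shortest_path_in G' x u (q1 @ tl q2)"
          unfolding shortest_path_in_def
        proof (intro conjI allI impI)
          show "walk_in G' x u (q1 @ tl q2)" by fact
        next
          fix q assume "walk_in G' x u q"
          then have "walk_in G x u q" using walk_mono isoG'(2) by blast
          then have "length p \<le> length q" using p(1) unfolding shortest_path_in_def by blast
          then show "length (q1 @ tl q2) \<le> length q" using ap(2) q1(2) q2(2) s(3) by linarith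
        qed
        then show "\<exists>p. shortest_path_in G' x u p \<and> x' \<in> set p" using inq by blast
      qed
    qed
  qed
  then show ?thesis using pc unfolding is_COM_def by blast
qed

end
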